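(* Let $V$ be the Volterra operator on $L^2[0,1]$ and let $0\neq f\in C[0,1]$. Then there exist a sequence $\{\lambda_k\}_{k\ge1}$ of positive numbers with $\lambda_k\to0$ and a number $d>0$ such that \[\|(\lambda_k-V)^{-1}f\|\ge e^{d/\lambda_k}\quad\text{for all }k\ge1.\]
   Context: $Vf(t)=\int_0^t f(s)\,ds$; the norm is the $L^2[0,1]$ norm. *)

theory Defs
  imports "HOL-Analysis.Analysis"
begin

text \<open>Elements of L^2[0,1] (complex scalars), represented by functions real => complex;
  only their values on [0,1] (up to null sets) matter.\<close>
definition L2_01 :: "(real \<Rightarrow> complex) set" where
  "L2_01 = {g. set_borel_measurable lborel {0..1} g \<and>
               set_integrable lborel {0..1} (\<lambda>t. (cmod (g t))^2)}"

definition L2_norm_01 :: "(real \<Rightarrow> complex) \<Rightarrow> real" where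
  "L2_norm_01 g = sqrt (LINT t:{0..1}|lborel. (cmod (g t))^2)"

definition volterra :: "(real \<Rightarrow> complex) \<Rightarrow> real \<Rightarrow> complex" where
  "volterra g t = (LINT s:{0..t}|lborel. g s)"

definition is_resolvent_image :: "real \<Rightarrow> (real \<Rightarrow> complex) \<Rightarrow> (real \<Rightarrow> complex) \<Rightarrow> bool" where
  "is_resolvent_image lam f g \<longleftrightarrow> g \<in> L2_01 \<and>
     (AE t in lborel. t \<in> {0..1} \<longrightarrow> complex_of_real lam * g t - volterra g t = f t)"

end

theory Submission
  imports Defs "HOL-Real_Asymp.Real_Asymp"
begin


lemma lim_pos: assumes "(c::real) > 0" shows "((\<lambda>m::nat. 1 - exp (-exp (real m * c))) \<longlongrightarrow> 1) sequentially"
proof -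
  have a: "filterlim (\<lambda>m::nat. exp (real m * c)) at_top sequentially" using assms by real_asymp
  have b: "((\<lambda>x::real. exp (-x)) \<longlongrightarrow> 0) at_top" by real_asymp
  have "((\<lambda>m::nat. exp (-exp (real m * c))) \<longlongrightarrow> 0) sequentially"
    using filterlim_compose[OF b a] by simp
  then show ?thesis using tendsto_diff[OF tendsto_const[of 1]] by fastforce
qed
lemma lim_neg: assumes "(c::real) < 0" shows "((\<lambda>m::nat. 1 - exp (-exp (real m * c))) \<longlongrightarrow> 0) sequentially"
proof -
  have a: "((\<lambda>m::nat. exp (real m * c)) \<longlongrightarrow> 0) sequentially" using assms by real_asymp
  have "((\<lambda>m::nat. 1 - exp (-exp (real m * c))) \<longlongrightarrow> 1 - exp (-0)) sequentially"
    by (intro tendsto_intros a)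
  then show ?thesis by simp
qed
lemma lim_dec: "(c::real) > 0 \<Longrightarrow> ((\<lambda>m::nat. exp (-(real m * c)) * exp 1) \<longlongrightarrow> 0) sequentially"
  by real_asymp



lemma aux1: "- ((-y)^(Suc n) /\<^sub>R fact (Suc n)) = (-1)^n * (y::real)^(Suc n) / fact (Suc n)"
proof -
  have a: "(-y)^(Suc n) = (-1)^(Suc n) * y^(Suc n)" by (rule power_minus)
  have b: "(-1::real)^(Suc n) = - ((-1)^n)" by simp
  have c: "x /\<^sub>R fact (Suc n) = x / (fact (Suc n) :: real)" for x :: real by (simp add: divide_inverse mult.commute)
  show ?thesis unfolding c a b by simp
qed
lemma alt_exp_sums:
  fixes y :: real
  shows "(\<lambda>n. (-1)^n * y^(Suc n) / fact (Suc n)) sums (1 - exp (-y))"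
proof -
  have "(\<lambda>n. (-y)^n /\<^sub>R fact n) sums exp (-y)" by (rule exp_converges)
  then have "(\<lambda>n. (-y)^(Suc n) /\<^sub>R fact (Suc n)) sums (exp (-y) - (-y)^0 /\<^sub>R fact 0)"
    using sums_Suc_iff[of "\<lambda>n. (-y)^n /\<^sub>R fact n" "exp (-y) - (-y)^0 /\<^sub>R fact 0"] by (simp only: diff_add_cancel)
  then have "(\<lambda>n. - ((-y)^(Suc n) /\<^sub>R fact (Suc n))) sums (- (exp (-y) - (-y)^0 /\<^sub>R fact 0))"
    by (rule sums_minus)
  then show ?thesis unfolding aux1 by simp
qed

lemma scal_rearr: "(i::real) *\<^sub>R ((a * (b * c) / d) *\<^sub>R (z::complex)) = (a * b / d) *\<^sub>R (i *\<^sub>R (c *\<^sub>R z))"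
  by (simp only: scaleR_scaleR) (rule arg_cong[where f="\<lambda>c. c *\<^sub>R z"], simp)
lemma ar: "real (Suc n) * (real m * ((1 - t) - s)) = -(real (Suc n) * real m * t) + real (Suc n * m) * (1 - s)"
  by (simp add: algebra_simps)

lemma summable_shift_exp: "summable (\<lambda>n. (y::real)^(Suc n) / fact (Suc n))"
proof -
  have "summable (\<lambda>n. inverse (fact n) * y ^ n)" by (rule summable_exp)
  then have "summable (\<lambda>n. inverse (fact (Suc n)) * y ^ (Suc n))"
    using summable_Suc_iff[of "\<lambda>n. inverse (fact n) * y ^ n"] by simp
  then show ?thesis by (simp add: divide_inverse mult.commute)
qed

lemma exp1_sums: "(\<lambda>n. 1 / fact n) sums (exp 1 :: real)"
  using exp_converges[of "1::real"] by (simp add: divide_inverse)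

lemma test_int: "(LINT s|lborel. indicator {0..1::real} s * (C::real)) = C"
  by simp

lemma test_int2: "integrable lborel (\<lambda>s. indicator {0..1::real} s * (C::real))"
  using borel_integrable_compact[of "{0..1::real}" "\<lambda>_. C"] by simp



lemma key_zero_integral:
  fixes f :: "real \<Rightarrow> complex"
  assumes cont: "continuous_on {0..1} f"
  and hyp: "\<forall>d>0. \<exists>N. \<forall>n\<ge>N. cmod (LINT s:{0..1}|lborel. exp (real n * (1 - s)) *\<^sub>R f s) \<le> exp (d * real n)"
  and r: "0 < r" "r < 1"
  shows "integral {0..r} f = 0"
proof -
  define t where "t = 1 - r"
  have t: "0 < t" "t < 1" using r by (auto simp: t_def)
  have r_eq: "r = 1 - t" by (simp add: t_def)
  obtain N where N: "\<And>n. n \<ge> N \<Longrightarrow> cmod (LINT s:{0..1}|lborel. exp (real n * (1 - s)) *\<^sub>R f s) \<le> exp (t/2 * real n)"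
    using hyp t by (meson half_gt_zero)
  have "\<exists>B>0. \<forall>x\<in>{0..1}. cmod (f x) \<le> B"
    using compact_imp_bounded[OF compact_continuous_image[OF cont compact_Icc]]
    by (auto simp: bounded_pos)
  then obtain B where B: "\<And>s. s \<in> {0..1} \<Longrightarrow> cmod (f s) \<le> B" "B > 0" by blast
  define F where "F m n s = indicator {0..1} s *\<^sub>R (((-1)^n * exp (real m * (r - s))^(Suc n) / fact (Suc n)) *\<^sub>R f s)" for m n :: nat and s :: real
  define L where "L m s = indicator {0..1} s *\<^sub>R ((1 - exp (-exp (real m * (r - s)))) *\<^sub>R f s)" for m :: nat and s :: real
  have int_F: "integrable lborel (F m n)" for m n
    unfolding F_def by (intro borel_integrable_compact continuous_intros cont) auto
  have sums_pt: "(\<lambda>n. F m n s) sums L m s" for m s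
  proof -
    have "(\<lambda>n. (-1)^n * exp (real m * (r - s))^(Suc n) / fact (Suc n)) sums (1 - exp (-exp (real m * (r - s))))"
      by (rule alt_exp_sums)
    then have "(\<lambda>n. ((-1)^n * exp (real m * (r - s))^(Suc n) / fact (Suc n)) *\<^sub>R f s) sums ((1 - exp (-exp (real m * (r - s)))) *\<^sub>R f s)"
      by (rule sums_scaleR_left)
    then show ?thesis unfolding F_def L_def by (rule sums_scaleR_right)
  qed
  have normF: "norm (F m n s) = indicator {0..1} s * (exp (real m * (r - s))^(Suc n) / fact (Suc n)) * cmod (f s)" for m n s
    unfolding F_def by (simp add: norm_mult abs_mult power_abs)
  have sum_norm_pt: "summable (\<lambda>n. norm (F m n s))" for m s
    unfolding normF using summable_shift_exp[of "exp (real m * (r - s))"]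
    by (intro summable_mult2 summable_mult) auto
  have int_norm_bound: "(LINT s|lborel. norm (F m n s)) \<le> exp (real m)^(Suc n) / fact (Suc n) * B" for m n
  proof -
    have "(LINT s|lborel. norm (F m n s)) \<le> (LINT s|lborel. indicator {0..1::real} s * (exp (real m)^(Suc n) / fact (Suc n) * B))"
    proof (rule integral_mono)
      show "integrable lborel (\<lambda>s. norm (F m n s))" using int_F by auto
      show "integrable lborel (\<lambda>s. indicator {0..1::real} s * (exp (real m)^(Suc n) / fact (Suc n) * B))"
        using borel_integrable_compact[of "{0..1::real}" "\<lambda>_. exp (real m)^(Suc n) / fact (Suc n) * B"] by simp
      fix s :: real
      show "norm (F m n s) \<le> indicator {0..1::real} s * (exp (real m)^(Suc n) / fact (Suc n) * B)"
      proof (cases "s \<in> {0..1}")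
        case True
        have rs: "r - s \<le> 1" using True r(2) by simp
        have "real m * (r - s) \<le> real m * 1" by (rule mult_left_mono[OF rs]) simp
        then have "exp (real m * (r - s)) \<le> exp (real m)" by simp
        then have "exp (real m * (r - s))^(Suc n) \<le> exp (real m)^(Suc n)"
          by (intro power_mono) auto
        then have le1: "exp (real m * (r - s))^(Suc n) / fact (Suc n) \<le> exp (real m)^(Suc n) / fact (Suc n)"
          by (intro divide_right_mono) auto
        have le2: "exp (real m * (r - s))^(Suc n) / fact (Suc n) * cmod (f s) \<le> exp (real m)^(Suc n) / fact (Suc n) * B"
          by (rule mult_mono[OF le1 B(1)[OF True]]) auto
        have i1: "indicator {0..1} s = (1::real)" using True by simp
        show ?thesis unfolding normF i1 using le2 by (simp only: mult_1_left)
      next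
        case False
        then have "indicator {0..1} s = (0::real)" by simp
        then show ?thesis unfolding normF by (simp only: mult_zero_left order_refl)
      qed
    qed
    also have "\<dots> = exp (real m)^(Suc n) / fact (Suc n) * B" by (rule test_int)
    finally show ?thesis .
  qed
  have sum_int_norm: "summable (\<lambda>n. LINT s|lborel. norm (F m n s))" for m
  proof (rule summable_comparison_test')
    show "summable (\<lambda>n. exp (real m)^(Suc n) / fact (Suc n) * B)"
      using summable_shift_exp by (intro summable_mult2)
    show "norm (LINT s|lborel. norm (F m n s)) \<le> exp (real m)^(Suc n) / fact (Suc n) * B" for n
    proof -
      have "0 \<le> (LINT s|lborel. norm (F m n s))" by (rule integral_nonneg_AE) auto
      then show ?thesis using int_norm_bound[of m n] by simp
    qed
  qed
  have Lsum: "(\<Sum>n. F m n s) = L m s" for m s using sums_pt by (rule sums_unique[symmetric])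
  have sumsI: "(\<lambda>n. integral\<^sup>L lborel (F m n)) sums integral\<^sup>L lborel (L m)" for m
    using sums_integral[OF int_F AE_I2[OF sum_norm_pt] sum_int_norm] by (simp only: Lsum)
  have Kint: "integral\<^sup>L lborel (F m n) = ((-1)^n * exp (-(real (Suc n) * real m * t)) / fact (Suc n)) *\<^sub>R (LINT s:{0..1}|lborel. exp (real (Suc n * m) * (1 - s)) *\<^sub>R f s)" for m n
  proof -
    have Feq: "F m n = (\<lambda>s. ((-1)^n * exp (-(real (Suc n) * real m * t)) / fact (Suc n)) *\<^sub>R (indicator {0..1} s *\<^sub>R (exp (real (Suc n * m) * (1 - s)) *\<^sub>R f s)))"
    proof (rule ext)
      fix s
      have "exp (real m * (r - s))^(Suc n) = exp (real (Suc n) * (real m * (r - s)))"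
        by (rule exp_of_nat_mult[symmetric])
      also have "real (Suc n) * (real m * (r - s)) = -(real (Suc n) * real m * t) + real (Suc n * m) * (1 - s)"
        unfolding r_eq by (rule ar)
      also have "exp (-(real (Suc n) * real m * t) + real (Suc n * m) * (1 - s)) = exp (-(real (Suc n) * real m * t)) * exp (real (Suc n * m) * (1 - s))"
        by (rule exp_add)
      finally have e: "exp (real m * (r - s))^(Suc n) = exp (-(real (Suc n) * real m * t)) * exp (real (Suc n * m) * (1 - s))" .
      show "F m n s = ((-1)^n * exp (-(real (Suc n) * real m * t)) / fact (Suc n)) *\<^sub>R (indicator {0..1} s *\<^sub>R (exp (real (Suc n * m) * (1 - s)) *\<^sub>R f s))"
        unfolding F_def e by (rule scal_rearr)
    qed
    show ?thesis unfolding set_lebesgue_integral_def Feq by (rule integral_scaleR_right)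
  qed
  have Fbound: "norm (integral\<^sup>L lborel (F m n)) \<le> exp (-(real m * (t/2))) * (1 / fact n)" if m: "m \<ge> N" "m \<ge> 1" for m n
  proof -
    have "m \<le> Suc n * m" by simp
    then have "Suc n * m \<ge> N" using m(1) by linarith
    then have KN: "cmod (LINT s:{0..1}|lborel. exp (real (Suc n * m) * (1 - s)) *\<^sub>R f s) \<le> exp (t/2 * real (Suc n * m))"
      by (rule N)
    define c where "c = exp (-(real (Suc n) * real m * t)) / fact (Suc n)"
    have c0: "c \<ge> 0" unfolding c_def by simp
    have ee: "exp (-(real (Suc n) * real m * t)) * exp (t/2 * real (Suc n * m)) = exp (-(real (Suc n) * (real m * (t/2))))"
      unfolding exp_add[symmetric] by (rule arg_cong[where f=exp]) (simp add: field_simps)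
    have cc: "c * exp (t/2 * real (Suc n * m)) = exp (-(real (Suc n) * (real m * (t/2)))) / fact (Suc n)"
      unfolding c_def ee[symmetric] by simp
    have mm: "real m * (t/2) \<le> real (Suc n) * (real m * (t/2))"
      using mult_right_mono[of 1 "real (Suc n)" "real m * (t/2)"] t by simp
    have "norm (integral\<^sup>L lborel (F m n)) = \<bar>(-1)^n * exp (-(real (Suc n) * real m * t)) / fact (Suc n)\<bar> * cmod (LINT s:{0..1}|lborel. exp (real (Suc n * m) * (1 - s)) *\<^sub>R f s)"
      unfolding Kint by (rule norm_scaleR)
    also have "\<bar>(-1)^n * exp (-(real (Suc n) * real m * t)) / fact (Suc n)\<bar> = c"
      unfolding c_def by (simp add: abs_mult power_abs)
    also have "c * cmod (LINT s:{0..1}|lborel. exp (real (Suc n * m) * (1 - s)) *\<^sub>R f s) \<le> c * exp (t/2 * real (Suc n * m))"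
      by (rule mult_left_mono[OF KN c0])
    also have "\<dots> \<le> exp (-(real m * (t/2))) / fact n"
      unfolding cc
    proof (rule frac_le)
      show "exp (-(real (Suc n) * (real m * (t/2)))) \<le> exp (-(real m * (t/2)))" using mm by simp
      show "(fact n :: real) \<le> fact (Suc n)" by (rule fact_mono) auto
      show "0 \<le> exp (-(real m * (t/2)))" by (rule less_imp_le, rule exp_gt_zero)
      show "0 < (fact n :: real)" by (rule fact_gt_zero)
    qed
    also have "\<dots> = exp (-(real m * (t/2))) * (1 / fact n)" by simp
    finally show ?thesis .
  qed
  have Lbound: "norm (integral\<^sup>L lborel (L m)) \<le> exp (-(real m * (t/2))) * exp 1" if m: "m \<ge> N" "m \<ge> 1" for m
  proof -
    have s1: "(\<lambda>n. exp (-(real m * (t/2))) * (1 / fact n)) sums (exp (-(real m * (t/2))) * exp 1)"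
      by (rule sums_mult[OF exp1_sums])
    have "integral\<^sup>L lborel (L m) = (\<Sum>n. integral\<^sup>L lborel (F m n))"
      using sumsI[of m] by (rule sums_unique)
    also have "norm \<dots> \<le> (\<Sum>n. exp (-(real m * (t/2))) * (1 / fact n))"
      by (rule norm_suminf_le[OF Fbound[OF m] sums_summable[OF s1]])
    also have "\<dots> = exp (-(real m * (t/2))) * exp 1" using s1 by (rule sums_unique[symmetric])
    finally show ?thesis .
  qed
  have lim0: "(\<lambda>m. integral\<^sup>L lborel (L m)) \<longlonglongrightarrow> 0"
  proof (rule Lim_null_comparison)
    show "\<forall>\<^sub>F m in sequentially. norm (integral\<^sup>L lborel (L m)) \<le> exp (-(real m * (t/2))) * exp 1"
      using Lbound eventually_ge_at_top[of "max N 1"] by (auto elim!: eventually_mono)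
    show "(\<lambda>m. exp (-(real m * (t/2))) * exp 1) \<longlonglongrightarrow> 0" using t by (intro lim_dec) auto
  qed
  define Lim where "Lim s = indicator {0..r} s *\<^sub>R f s" for s
  have contr: "continuous_on {0..r} f" using cont r by (auto intro: continuous_on_subset)
  have intLim: "integrable lborel Lim"
    unfolding Lim_def by (rule borel_integrable_compact[OF compact_Icc contr])
  have limL: "(\<lambda>m. integral\<^sup>L lborel (L m)) \<longlonglongrightarrow> integral\<^sup>L lborel Lim"
  proof (rule integral_dominated_convergence[where w="\<lambda>s. indicator {0..1} s * B"])
    show "Lim \<in> borel_measurable lborel" using intLim by auto
    show "L m \<in> borel_measurable lborel" for m
    proof -
      have "integrable lborel (L m)"
        unfolding L_def by (intro borel_integrable_compact continuous_intros cont) auto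
      then show ?thesis by auto
    qed
    show "integrable lborel (\<lambda>s. indicator {0..1::real} s * B)" by (rule test_int2)
    show "AE s in lborel. (\<lambda>m. L m s) \<longlonglongrightarrow> Lim s"
      using AE_lborel_singleton[of r]
    proof eventually_elim
      fix s assume sr: "s \<noteq> r"
      show "(\<lambda>m. L m s) \<longlonglongrightarrow> Lim s"
      proof (cases "s \<in> {0..1}")
        case True
        then have Ls: "L m s = (1 - exp (-exp (real m * (r - s)))) *\<^sub>R f s" for m
          unfolding L_def by simp
        show ?thesis
        proof (cases "s < r")
          case True
          then have "Lim s = f s" using \<open>s \<in> {0..1}\<close> unfolding Lim_def by simp
          moreover have "(\<lambda>m. (1 - exp (-exp (real m * (r - s)))) *\<^sub>R f s) \<longlonglongrightarrow> 1 *\<^sub>R f s"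
            using True by (intro tendsto_scaleR lim_pos tendsto_const) auto
          ultimately show ?thesis unfolding Ls by simp
        next
          case False
          then have "Lim s = 0" using sr unfolding Lim_def by simp
          moreover have "(\<lambda>m. (1 - exp (-exp (real m * (r - s)))) *\<^sub>R f s) \<longlonglongrightarrow> 0 *\<^sub>R f s"
            using False sr by (intro tendsto_scaleR lim_neg tendsto_const) auto
          ultimately show ?thesis unfolding Ls by simp
        qed
      next
        case False
        then have "L m s = 0" for m unfolding L_def by simp
        moreover have "s \<notin> {0..r}" using False r by auto
        then have "Lim s = 0" unfolding Lim_def by simp
        ultimately show ?thesis by simp
      qed
    qed
    show "AE s in lborel. norm (L m s) \<le> indicator {0..1} s * B" for m
    proof (rule AE_I2)
      fix s
      show "norm (L m s) \<le> indicator {0..1} s * B"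
      proof (cases "s \<in> {0..1}")
        case True
        have e1: "0 < exp (-exp (real m * (r - s)))" by simp
        have e2: "exp (-exp (real m * (r - s))) \<le> 1" by simp
        have "\<bar>1 - exp (-exp (real m * (r - s)))\<bar> \<le> 1" using e1 e2 by linarith
        then have le: "\<bar>1 - exp (-exp (real m * (r - s)))\<bar> * cmod (f s) \<le> 1 * B"
          by (rule mult_mono[OF _ B(1)[OF True]]) simp_all
        have "L m s = (1 - exp (-exp (real m * (r - s)))) *\<^sub>R f s"
          unfolding L_def using True by simp
        then have "norm (L m s) = \<bar>1 - exp (-exp (real m * (r - s)))\<bar> * cmod (f s)"
          by (simp only: norm_scaleR)
        moreover have "indicator {0..1} s = (1::real)" using True by simp
        ultimately show ?thesis using le by simp
      next
        case False
        then have "L m s = 0" unfolding L_def by simp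
        moreover have "indicator {0..1} s = (0::real)" using False by simp
        ultimately show ?thesis by simp
      qed
    qed
  qed
  have Limeq: "Lim = (\<lambda>s. indicator {0..r} s *\<^sub>R f s)" by (rule ext) (simp only: Lim_def)
  have "integral\<^sup>L lborel Lim = 0" using LIMSEQ_unique[OF limL lim0] .
  then have z: "(LINT x:{0..r}|lborel. f x) = 0" unfolding set_lebesgue_integral_def Limeq .
  have si: "set_integrable lborel {0..r} f" unfolding set_integrable_def using intLim unfolding Limeq .
  have "(LINT x:{0..r}|lborel. f x) = integral {0..r} f"
    by (rule set_borel_integral_eq_integral(2)[OF si])
  from this[symmetric] z show ?thesis by (rule trans)
qed

lemma zero_from_integrals:
  fixes f :: "real \<Rightarrow> complex"
  assumes cont: "continuous_on {0..1} f"
    and z: "\<And>r. 0 < r \<Longrightarrow> r < 1 \<Longrightarrow> integral {0..r} f = 0"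
  shows "\<forall>x\<in>{0..1}. f x = 0"
proof -
  have inner: "f x = 0" if x: "0 < x" "x < 1" for x
  proof -
    define a where "a = x / 2"
    define b where "b = (1 + x) / 2"
    have ab: "a < b" "0 < a" "b < 1" "x \<in> {a..b}" using x by (auto simp: a_def b_def)
    have sub: "{a..b} \<subseteq> {0..1}" using ab by auto
    have "x \<in> {0..1}" using x by auto
    have d1: "((\<lambda>u. integral {0..u} f) has_vector_derivative f x) (at x within {0..1})"
      by (rule integral_has_vector_derivative[OF cont \<open>x \<in> {0..1}\<close>])
    then have d1': "((\<lambda>u. integral {0..u} f) has_vector_derivative f x) (at x within {a..b})"
      by (rule has_vector_derivative_within_subset[OF _ sub])
    have d0: "((\<lambda>u. 0) has_vector_derivative 0) (at x within {a..b})"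
      by (rule has_vector_derivative_const)
    have eq: "\<And>u. u \<in> {a..b} \<Longrightarrow> integral {0..u} f = 0"
      using ab by (intro z) auto
    have d2: "((\<lambda>u. integral {0..u} f) has_vector_derivative 0) (at x within {a..b})"
      by (rule has_vector_derivative_transform[OF ab(4) eq d0])
    show ?thesis
      using vector_derivative_unique_within_closed_interval[of a b x "\<lambda>u. integral {0..u} f" "f x" 0]
        ab d1' d2 by simp
  qed
  show ?thesis
  proof
    fix x :: real assume "x \<in> {0..1}"
    then have xc: "x \<in> closure {0<..<1::real}" by simp
    have "continuous_on (closure {0<..<1::real}) f" using cont by simp
    then show "f x = 0" 
      by (rule continuous_constant_on_closure[OF _ _ xc]) (use inner in auto)
  qed
qed


lemma le_one_plus_sq: "0 \<le> (a::real) \<Longrightarrow> a \<le> 1 + a^2"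
proof (cases "a \<le> 1")
  case True
  then show ?thesis by (simp add: add_increasing2)
next
  case False
  then have "a * 1 \<le> a * a" by (intro mult_left_mono) auto
  then show ?thesis by (simp add: power2_eq_square)
qed

lemma indicator01_int: "integrable lborel (\<lambda>s. indicator {0..1::real} s * (C::real))"
  using borel_integrable_compact[of "{0..1::real}" "\<lambda>_. C"] by simp

lemma indicator01_integral: "(LINT s|lborel. indicator {0..1::real} s * (C::real)) = C"
  by simp

lemma L1_le_L2:
  fixes g :: "real \<Rightarrow> complex"
  assumes gi: "set_integrable lborel {0..1} g"
    and g2: "set_integrable lborel {0..1} (\<lambda>t. (cmod (g t))^2)"
  shows "(LINT t:{0..1}|lborel. cmod (g t)) \<le> sqrt (LINT t:{0..1}|lborel. (cmod (g t))^2)"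
proof -
  define a where "a = (LINT t:{0..1}|lborel. cmod (g t))"
  define Q where "Q = (LINT t:{0..1}|lborel. (cmod (g t))^2)"
  define u where "u x = indicator {0..1} x * cmod (g x)" for x :: real
  define q where "q x = indicator {0..1} x * (cmod (g x))^2" for x :: real
  have ui: "integrable lborel u"
  proof -
    have "integrable lborel (\<lambda>x. norm (indicator {0..1} x *\<^sub>R g x))"
      using gi unfolding set_integrable_def by (rule integrable_norm)
    moreover have "(\<lambda>x. norm (indicator {0..1} x *\<^sub>R g x)) = u"
      by (rule ext) (simp add: u_def)
    ultimately show ?thesis by simp
  qed
  have qi: "integrable lborel q" using g2 unfolding set_integrable_def q_def by simp
  have ua: "integral\<^sup>L lborel u = a" unfolding a_def u_def set_lebesgue_integral_def by simp
  have qQ: "integral\<^sup>L lborel q = Q" unfolding Q_def q_def set_lebesgue_integral_def by simp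
  have eq: "(\<lambda>x. indicator {0..1} x * (cmod (g x) - a)^2) = (\<lambda>x. (q x - (2 * a) * u x) + indicator {0..1::real} x * a^2)"
    by (rule ext) (simp add: q_def u_def power2_eq_square algebra_simps)
  have "0 \<le> (LINT x|lborel. indicator {0..1} x * (cmod (g x) - a)^2)"
    by (rule integral_nonneg_AE) simp
  also have "\<dots> = (LINT x|lborel. (q x - (2 * a) * u x) + indicator {0..1::real} x * a^2)"
    unfolding eq ..
  also have "\<dots> = (LINT x|lborel. q x - (2 * a) * u x) + (LINT x|lborel. indicator {0..1::real} x * a^2)"
    by (rule Bochner_Integration.integral_add) (use qi ui indicator01_int in auto)
  also have "(LINT x|lborel. q x - (2 * a) * u x) = Q - 2 * a * a"
    using qi ui qQ ua by simp
  also have "(LINT x|lborel. indicator {0..1::real} x * a^2) = a^2" by (rule indicator01_integral)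
  finally have "a^2 \<le> Q" by (simp add: power2_eq_square)
  then show ?thesis unfolding a_def Q_def by (rule real_le_rsqrt)
qed


lemma resolvent_lower:
  fixes f g :: "real \<Rightarrow> complex"
  assumes cont: "continuous_on {0..1} f" and lam: "lam > 0"
    and res: "is_resolvent_image lam f g"
  shows "cmod (integral {0..1} (\<lambda>s. exp ((1 - s) / lam) *\<^sub>R f s)) / lam \<le> L2_norm_01 g"
proof -
  have gL: "g \<in> L2_01" and AEres: "AE t in lborel. t \<in> {0..1} \<longrightarrow> complex_of_real lam * g t - volterra g t = f t"
    using res unfolding is_resolvent_image_def by auto
  have gm: "(\<lambda>x. indicator {0..1} x *\<^sub>R g x) \<in> borel_measurable lborel"
    using gL unfolding L2_01_def set_borel_measurable_def by auto
  have g2: "set_integrable lborel {0..1} (\<lambda>t. (cmod (g t))^2)"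
    using gL unfolding L2_01_def by auto
  define F where "F x = indicator {0..1} x * 1 + indicator {0..1::real} x * (cmod (g x))^2" for x :: real
  have Fi: "integrable lborel F"
    unfolding F_def using indicator01_int[of 1] g2 unfolding set_integrable_def
    by (intro Bochner_Integration.integrable_add) auto
  have Fb: "AE x in lborel. norm (indicator {0..1} x *\<^sub>R g x) \<le> norm (F x)"
  proof (rule AE_I2)
    fix x :: real
    show "norm (indicator {0..1} x *\<^sub>R g x) \<le> norm (F x)"
      unfolding F_def using le_one_plus_sq[of "cmod (g x)"] by (cases "x \<in> {0..1}") auto
  qed
  have gi: "set_integrable lborel {0..1} g"
    unfolding set_integrable_def by (rule Bochner_Integration.integrable_bound[OF Fi gm Fb])
  have git: "set_integrable lborel {0..t} g" if "t \<in> {0..1}" for t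
    by (rule set_integrable_subset[OF gi]) (use that in auto)
  have Gt: "volterra g t = integral {0..t} g" if "t \<in> {0..1}" for t
    unfolding volterra_def by (rule set_borel_integral_eq_integral(2)[OF git[OF that]])
  have gHK: "g integrable_on {0..1}" by (rule set_borel_integral_eq_integral(1)[OF gi])
  have Gcont: "continuous_on {0..1} (volterra g)"
    by (rule continuous_on_eq[OF indefinite_integral_continuous_1[OF gHK]]) (simp add: Gt)
  define h where "h t = (f t + volterra g t) / complex_of_real lam" for t
  have hcont: "continuous_on {0..1} h"
    unfolding h_def using lam by (intro continuous_intros cont Gcont) auto
  have AEgh: "AE t in lborel. t \<in> {0..1} \<longrightarrow> g t = h t"
    using AEres
  proof eventually_elim
    fix t assume *: "t \<in> {0..1} \<longrightarrow> complex_of_real lam * g t - volterra g t = f t"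
    show "t \<in> {0..1} \<longrightarrow> g t = h t"
    proof
      assume "t \<in> {0..1}"
      then have e: "complex_of_real lam * g t - volterra g t = f t" using * by blast
      have "complex_of_real lam \<noteq> 0" using lam by simp
      then show "g t = h t" unfolding h_def using e by (simp add: field_simps)
    qed
  qed
  have Vh: "volterra g t = integral {0..t} h" if t: "t \<in> {0..1}" for t
  proof -
    have hc: "continuous_on {0..t} h" by (rule continuous_on_subset[OF hcont]) (use t in auto)
    have hi: "integrable lborel (\<lambda>s. indicator {0..t} s *\<^sub>R h s)"
      by (rule borel_integrable_compact[OF compact_Icc hc])
    have "volterra g t = integral\<^sup>L lborel (\<lambda>s. indicator {0..t} s *\<^sub>R g s)"
      unfolding volterra_def set_lebesgue_integral_def ..
    also have "\<dots> = integral\<^sup>L lborel (\<lambda>s. indicator {0..t} s *\<^sub>R h s)"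
    proof (rule integral_cong_AE)
      show "(\<lambda>s. indicator {0..t} s *\<^sub>R g s) \<in> borel_measurable lborel"
        using git[OF t] unfolding set_integrable_def by auto
      show "(\<lambda>s. indicator {0..t} s *\<^sub>R h s) \<in> borel_measurable lborel"
        using hi by auto
      show "AE s in lborel. indicator {0..t} s *\<^sub>R g s = indicator {0..t} s *\<^sub>R h s"
        using AEgh
      proof eventually_elim
        fix s assume *: "s \<in> {0..1} \<longrightarrow> g s = h s"
        show "indicator {0..t} s *\<^sub>R g s = indicator {0..t} s *\<^sub>R h s"
        proof (cases "s \<in> {0..t}")
          case True
          then have "s \<in> {0..1}" using t by auto
          then show ?thesis using * by simp
        qed simp
      qed
    qed
    also have "\<dots> = integral {0..t} h"
      using set_borel_integral_eq_integral(2)[of "{0..t}" h] hi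
      unfolding set_integrable_def set_lebesgue_integral_def by simp
    finally show ?thesis .
  qed
  have Vderiv: "(volterra g has_vector_derivative h t) (at t within {0..1})" if t: "t \<in> {0..1}" for t
    by (rule has_vector_derivative_transform[OF t Vh integral_has_vector_derivative[OF hcont t]])
  define P where "P t = exp (-t/lam) *\<^sub>R volterra g t" for t
  have Pderiv: "(P has_vector_derivative (exp (-t/lam) / lam) *\<^sub>R f t) (at t within {0..1})" if t: "t \<in> {0..1}" for t
  proof -
    have ed: "((\<lambda>t. exp (-t/lam)) has_field_derivative (exp (-t/lam) * (-1/lam))) (at t within {0..1})"
      using lam by (auto intro!: derivative_eq_intros)
    have "(P has_vector_derivative (exp (-t/lam) *\<^sub>R h t + (exp (-t/lam) * (-1/lam)) *\<^sub>R volterra g t)) (at t within {0..1})"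
      unfolding P_def by (rule has_vector_derivative_scaleR[OF ed Vderiv[OF t]])
    moreover have "exp (-t/lam) *\<^sub>R h t + (exp (-t/lam) * (-1/lam)) *\<^sub>R volterra g t = (exp (-t/lam) / lam) *\<^sub>R f t"
      unfolding h_def scaleR_conv_of_real using lam by (simp add: field_simps)
    ultimately show ?thesis by simp
  qed
  have ftc: "((\<lambda>t. (exp (-t/lam) / lam) *\<^sub>R f t) has_integral (P 1 - P 0)) {0..1}"
    by (rule fundamental_theorem_of_calculus, simp, erule Pderiv)
  have P0: "P 0 = 0" unfolding P_def using Vh[of 0] by simp
  have V1: "volterra g 1 = (1/lam) *\<^sub>R integral {0..1} (\<lambda>s. exp ((1 - s) / lam) *\<^sub>R f s)"
  proof -
    have "integral {0..1} (\<lambda>t. (exp (-t/lam) / lam) *\<^sub>R f t) = P 1" using ftc P0 by (simp add: integral_unique)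
    then have "exp (1/lam) *\<^sub>R integral {0..1} (\<lambda>t. (exp (-t/lam) / lam) *\<^sub>R f t) = volterra g 1"
      unfolding P_def by (simp add: exp_minus)
    moreover have "exp (1/lam) *\<^sub>R integral {0..1} (\<lambda>t. (exp (-t/lam) / lam) *\<^sub>R f t) = (1/lam) *\<^sub>R integral {0..1} (\<lambda>s. exp ((1 - s) / lam) *\<^sub>R f s)"
    proof -
      define c where "c = exp (-1/lam) / lam"
      have eqf: "(\<lambda>t. (exp (-t/lam) / lam) *\<^sub>R f t) = (\<lambda>t. c *\<^sub>R (exp ((1 - t) / lam) *\<^sub>R f t))"
      proof (rule ext)
        fix t
        have "exp (-t/lam) = exp (-1/lam) * exp ((1 - t) / lam)"
          unfolding exp_add[symmetric] by (rule arg_cong[where f=exp]) (simp add: diff_divide_distrib)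
        then show "(exp (-t/lam) / lam) *\<^sub>R f t = c *\<^sub>R (exp ((1 - t) / lam) *\<^sub>R f t)"
          unfolding c_def by (simp add: scaleR_scaleR)
      qed
      have ec: "exp (1/lam) * c = 1/lam"
        unfolding c_def by (simp add: exp_minus field_simps)
      show ?thesis unfolding eqf integral_cmul by (simp only: scaleR_scaleR[of "exp (1/lam)" c] ec)
    qed
    ultimately show ?thesis by simp
  qed
  have "cmod (integral {0..1} (\<lambda>s. exp ((1 - s) / lam) *\<^sub>R f s)) / lam = cmod (volterra g 1)"
    unfolding V1 using lam by simp
  also have "\<dots> \<le> (LINT t:{0..1}|lborel. cmod (g t))"
    unfolding volterra_def by (rule set_integral_norm_bound[OF gi])
  also have "\<dots> \<le> L2_norm_01 g"
    unfolding L2_norm_01_def by (rule L1_le_L2[OF gi g2])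
  finally show ?thesis .
qed


lemma resolvent_exists:
  fixes f :: "real \<Rightarrow> complex"
  assumes cont: "continuous_on {0..1} f" and lam: "lam > 0"
  shows "\<exists>g. is_resolvent_image lam f g"
proof -
  define Q where "Q t = integral {0..t} (\<lambda>s. exp (-s/lam) *\<^sub>R f s)" for t
  define G where "G t = (exp (t/lam) / lam) *\<^sub>R Q t" for t
  define g where "g t = (f t + G t) / complex_of_real lam" for t
  have ic: "continuous_on {0..1} (\<lambda>s. exp (-s/lam) *\<^sub>R f s)"
    using lam by (intro continuous_intros cont) auto
  have Qcont: "continuous_on {0..1} Q"
    unfolding Q_def by (rule indefinite_integral_continuous_1[OF integrable_continuous_real[OF ic]])
  have Gcont: "continuous_on {0..1} G"
    unfolding G_def using lam by (intro continuous_intros Qcont) auto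
  have gcont: "continuous_on {0..1} g"
    unfolding g_def using lam by (intro continuous_intros cont Gcont) auto
  have Gderiv: "(G has_vector_derivative g t) (at t within {0..1})" if t: "t \<in> {0..1}" for t
  proof -
    have Qd: "(Q has_vector_derivative exp (-t/lam) *\<^sub>R f t) (at t within {0..1})"
      unfolding Q_def by (rule integral_has_vector_derivative[OF ic t])
    have ed: "((\<lambda>t. exp (t/lam) / lam) has_field_derivative (exp (t/lam) * (1/lam) / lam)) (at t within {0..1})"
      using lam by (auto intro!: derivative_eq_intros)
    have "(G has_vector_derivative ((exp (t/lam) / lam) *\<^sub>R (exp (-t/lam) *\<^sub>R f t) + (exp (t/lam) * (1/lam) / lam) *\<^sub>R Q t)) (at t within {0..1})"
      unfolding G_def by (rule has_vector_derivative_scaleR[OF ed Qd])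
    moreover have "(exp (t/lam) / lam) *\<^sub>R (exp (-t/lam) *\<^sub>R f t) + (exp (t/lam) * (1/lam) / lam) *\<^sub>R Q t = g t"
    proof -
      have "exp (t/lam) * exp (-t/lam) = 1" by (simp add: exp_minus)
      then have "(exp (t/lam) / lam) *\<^sub>R (exp (-t/lam) *\<^sub>R f t) = (1/lam) *\<^sub>R f t"
        by (simp add: scaleR_scaleR)
      moreover have "(exp (t/lam) * (1/lam) / lam) *\<^sub>R Q t = (1/lam) *\<^sub>R G t"
        unfolding G_def by (simp add: scaleR_scaleR)
      ultimately show ?thesis unfolding g_def scaleR_conv_of_real using lam
        by (simp add: field_simps)
    qed
    ultimately show ?thesis by simp
  qed
  have G0: "G 0 = 0" unfolding G_def Q_def by simp
  have Vg: "volterra g t = G t" if t: "t \<in> {0..1}" for t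
  proof -
    have sub: "{0..t} \<subseteq> {0..1}" using t by auto
    have gc: "continuous_on {0..t} g" by (rule continuous_on_subset[OF gcont sub])
    have si: "set_integrable lborel {0..t} g"
      unfolding set_integrable_def by (rule borel_integrable_compact[OF compact_Icc gc])
    have "volterra g t = integral {0..t} g"
      unfolding volterra_def by (rule set_borel_integral_eq_integral(2)[OF si])
    moreover have "(g has_integral (G t - G 0)) {0..t}"
    proof (rule fundamental_theorem_of_calculus)
      show "0 \<le> t" using t by simp
      fix x assume "x \<in> {0..t}"
      then have "x \<in> {0..1}" using sub by auto
      then show "(G has_vector_derivative g x) (at x within {0..t})"
        by (rule has_vector_derivative_within_subset[OF Gderiv sub])
    qed
    ultimately show ?thesis using G0 by (simp add: integral_unique)
  qed
  have "is_resolvent_image lam f g"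
    unfolding is_resolvent_image_def
  proof
    show "g \<in> L2_01"
      unfolding L2_01_def
    proof (intro CollectI conjI)
      show "set_borel_measurable lborel {0..1} g"
        unfolding set_borel_measurable_def
        using borel_integrable_compact[OF compact_Icc gcont] by auto
      have "continuous_on {0..1} (\<lambda>t. (cmod (g t))^2)" by (intro continuous_intros gcont)
      then show "set_integrable lborel {0..1} (\<lambda>t. (cmod (g t))^2)"
        unfolding set_integrable_def by (rule borel_integrable_compact[OF compact_Icc])
    qed
    show "AE t in lborel. t \<in> {0..1} \<longrightarrow> complex_of_real lam * g t - volterra g t = f t"
    proof (rule AE_I2, rule impI)
      fix t :: real assume t: "t \<in> {0..1}"
      have "complex_of_real lam \<noteq> 0" using lam by simp
      then show "complex_of_real lam * g t - volterra g t = f t"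
        unfolding Vg[OF t] g_def by simp
    qed
  qed
  then show ?thesis by blast
qed

theorem lemma4p10:
  fixes f :: "real \<Rightarrow> complex"
  assumes "continuous_on {0..1} f"
    and "\<exists>t\<in>{0..1}. f t \<noteq> 0"
  shows "\<exists>lam :: nat \<Rightarrow> real. \<exists>d > 0. (\<forall>k. lam k > 0) \<and> lam \<longlonglongrightarrow> 0 \<and>
           (\<forall>k. \<exists>g. is_resolvent_image (lam k) f g) \<and>
           (\<forall>k g. is_resolvent_image (lam k) f g \<longrightarrow> L2_norm_01 g \<ge> exp (d / lam k))"
proof -
  note cont = assms(1)
  define K where "K n = (LINT s:{0..1}|lborel. exp (real n * (1 - s)) *\<^sub>R f s)" for n :: nat
  have "\<exists>d>0. \<forall>N. \<exists>n\<ge>N. cmod (K n) > exp (d * real n)"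
  proof (rule ccontr)
    assume "\<not> ?thesis"
    then have hyp: "\<forall>d>0. \<exists>N. \<forall>n\<ge>N. cmod (LINT s:{0..1}|lborel. exp (real n * (1 - s)) *\<^sub>R f s) \<le> exp (d * real n)"
      unfolding K_def by (auto simp: not_less) (metis not_le)
    have "\<forall>x\<in>{0..1}. f x = 0"
      by (rule zero_from_integrals[OF cont]) (rule key_zero_integral[OF cont hyp])
    then show False using assms(2) by blast
  qed
  then obtain d where d: "d > 0" "\<And>N. \<exists>n\<ge>N. cmod (K n) > exp (d * real n)" by blast
  have "\<forall>k. \<exists>n. n \<ge> Suc k \<and> cmod (K n) > exp (d * real n)" using d(2) by blast
  then obtain nn where nn: "\<And>k. nn k \<ge> Suc k" "\<And>k. cmod (K (nn k)) > exp (d * real (nn k))"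
    by metis
  define lam where "lam k = 1 / real (nn k)" for k
  have npos: "real (nn k) > 0" for k using nn(1)[of k] by simp
  have lampos: "lam k > 0" for k unfolding lam_def using npos by simp
  have lim: "lam \<longlonglongrightarrow> 0"
  proof -
    have "filterlim (\<lambda>k. real (nn k)) at_top sequentially"
    proof (rule filterlim_at_top_mono[OF filterlim_real_sequentially])
      show "\<forall>\<^sub>F k in sequentially. real k \<le> real (nn k)"
        using nn(1) by (auto intro!: always_eventually simp: Suc_le_eq less_imp_le)
    qed
    then have "(\<lambda>k. inverse (real (nn k))) \<longlonglongrightarrow> 0" by (rule tendsto_inverse_0_at_top)
    then show ?thesis unfolding lam_def by (simp add: divide_inverse)
  qed
  have ex: "\<forall>k. \<exists>g. is_resolvent_image (lam k) f g"
    using resolvent_exists[OF cont lampos] by blast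
  have bound: "L2_norm_01 g \<ge> exp (d / lam k)" if res: "is_resolvent_image (lam k) f g" for k g
  proof -
    define n where "n = nn k"
    have np: "real n > 0" unfolding n_def by (rule npos)
    have le: "cmod (integral {0..1} (\<lambda>s. exp ((1 - s) / lam k) *\<^sub>R f s)) / lam k \<le> L2_norm_01 g"
      by (rule resolvent_lower[OF cont lampos res])
    have e1: "(\<lambda>s. exp ((1 - s) / lam k) *\<^sub>R f s) = (\<lambda>s. exp (real n * (1 - s)) *\<^sub>R f s)"
      unfolding lam_def n_def by (simp add: mult.commute)
    have ci: "continuous_on {0..1} (\<lambda>s. exp (real n * (1 - s)) *\<^sub>R f s)"
      by (intro continuous_intros cont)
    have si: "set_integrable lborel {0..1} (\<lambda>s. exp (real n * (1 - s)) *\<^sub>R f s)"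
      unfolding set_integrable_def by (rule borel_integrable_compact[OF compact_Icc ci])
    have e2: "integral {0..1} (\<lambda>s. exp (real n * (1 - s)) *\<^sub>R f s) = K n"
      unfolding K_def by (rule set_borel_integral_eq_integral(2)[OF si, symmetric])
    have e3: "cmod (K n) / lam k = real n * cmod (K n)"
      unfolding lam_def n_def by simp
    have "exp (d / lam k) = exp (d * real n)" unfolding lam_def n_def by simp
    also have "\<dots> < cmod (K n)" unfolding n_def by (rule nn(2))
    also have "\<dots> \<le> real n * cmod (K n)"
    proof -
      have "1 \<le> real n" unfolding n_def using nn(1)[of k] by simp
      then show ?thesis using mult_right_mono[of 1 "real n" "cmod (K n)"] by simp
    qed
    also have "\<dots> \<le> L2_norm_01 g" using le unfolding e1 e2 e3 .
    finally show ?thesis by simp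
  qed
  show ?thesis
    using d(1) lampos lim ex bound by blast
qed

end
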